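(* For an integer $k\ge 1$ let $n_k=2^{2^k-1}$. Then $n_k$ is super-imperfect, i.e. $2\beta(\beta(n_k))=n_k$, if and only if $k\in\{1,2,3,4,5\}$.
   Context: $\beta$ is the multiplicative arithmetic function with $\beta(1)=1$ and $\beta(p^a)=p^a-p^{a-1}+p^{a-2}-\cdots+(-1)^a=\frac{p^{a+1}+(-1)^a}{p+1}$ for every prime power $p^a$ ($a\ge1$). A positive integer $n$ is called super-imperfect if $2\beta(\beta(n))=n$. *)

theory Defs
  imports "HOL-Computational_Algebra.Primes"
begin

definition beta_pp :: "nat \<Rightarrow> nat \<Rightarrow> int" where
  "beta_pp p a = (\<Sum>i\<le>a. (-1) ^ (a - i) * int p ^ i)"

definition beta :: "nat \<Rightarrow> nat" where
  "beta n = nat (\<Prod>p\<in>prime_factors n. beta_pp p (multiplicity p n))"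

definition super_imperfect :: "nat \<Rightarrow> bool" where
  "super_imperfect n \<longleftrightarrow> n > 0 \<and> 2 * beta (beta n) = n"

end

theory Submission imports Defs begin

lemma beta_pp_rec: "beta_pp p (Suc a) = int p * beta_pp p a + (-1)^(Suc a)"
proof -
  have "beta_pp p (Suc a) = (-1)^(Suc a) + (\<Sum>i\<le>a. (-1) ^ (Suc a - Suc i) * int p ^ Suc i)"
    unfolding beta_pp_def by (subst sum.atMost_Suc_shift) simp
  also have "(\<Sum>i\<le>a. (-1) ^ (Suc a - Suc i) * int p ^ Suc i) = int p * beta_pp p a"
    unfolding beta_pp_def sum_distrib_left by (intro sum.cong) (auto simp: algebra_simps)
  finally show ?thesis by simp
qed

lemma beta_pp_closed: "beta_pp p a * (int p + 1) = int p ^ (Suc a) + (-1)^a"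
proof (induction a)
  case 0 then show ?case by (simp add: beta_pp_def)
next
  case (Suc a)
  have "beta_pp p (Suc a) * (int p + 1) = int p * (beta_pp p a * (int p + 1)) + (-1)^(Suc a) * (int p + 1)"
    by (simp add: beta_pp_rec algebra_simps)
  also have "\<dots> = int p ^ Suc (Suc a) + (-1)^(Suc a)"
    using Suc.IH by (simp add: algebra_simps)
  finally show ?case .
qed

lemma beta_pp_one: "beta_pp p 1 = int p - 1"
  by (simp add: beta_pp_def)

lemma beta_one0: "beta 1 = 1" by (simp add: beta_def)
lemma beta_one: "beta 1 = 1" "beta (Suc 0) = Suc 0" using beta_one0 by simp_all

lemma beta_prime_times:
  assumes p: "prime p" and nd: "\<not> p dvd m" and m: "m > 0"
  shows "beta (p * m) = (p - 1) * beta m"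
proof -
  have pf: "prime_factors (p*m) = insert p (prime_factors m)"
    using p m by (simp add: prime_factors_product prime_prime_factors)
  have nin: "p \<notin> prime_factors m" using nd by auto
  have mp: "multiplicity p (p*m) = 1"
    using multiplicity_times_same[where p=p and x=m] not_dvd_imp_multiplicity_0[OF nd] p m prime_gt_1_nat[OF p] by simp
  have mq: "multiplicity q (p*m) = multiplicity q m" if "q \<in> prime_factors m" for q
  proof -
    have "q \<noteq> p" using that nin by auto
    moreover have "prime q" using that by auto
    ultimately have "\<not> q dvd p" using p primes_dvd_imp_eq by blast
    thus ?thesis using \<open>prime q\<close> by (simp add: multiplicity_prime_elem_times_other)
  qed
  have "(\<Prod>q\<in>prime_factors (p*m). beta_pp q (multiplicity q (p*m)))
      = beta_pp p 1 * (\<Prod>q\<in>prime_factors m. beta_pp q (multiplicity q m))"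
    unfolding pf using nin mp mq by (simp add: prod.insert)
  moreover have "beta_pp p 1 \<ge> 0" using prime_gt_0_nat[OF p] unfolding beta_pp_one by simp
  moreover have "nat (int p - 1) = p - 1" using prime_gt_0_nat[OF p] by linarith
  ultimately show ?thesis unfolding beta_def beta_pp_one
    using p prime_gt_0_nat by (simp add: nat_mult_distrib of_nat_diff)
qed

lemma beta_two_pow:
  assumes "odd a"
  shows "3 * beta (2^a) = 2^(Suc a) - 1"
proof -
  have a: "a > 0" using assms by (cases a) auto
  have pf: "prime_factors ((2::nat)^a) = {2}"
    using a by (simp add: prime_factorization_prime_power)
  have "beta (2^a) = nat (beta_pp 2 a)"
    unfolding beta_def pf by simp
  moreover have "beta_pp 2 a * 3 = 2 ^ Suc a - 1"
    using beta_pp_closed[of 2 a] assms by simp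
  moreover have "(2::int)^a \<ge> 1" using one_le_power[of "2::int" a] by simp
  ultimately have "beta_pp 2 a \<ge> 0" by (simp only: power_Suc)
  with \<open>beta (2^a) = nat (beta_pp 2 a)\<close> \<open>beta_pp 2 a * 3 = 2 ^ Suc a - 1\<close>
  have "int (3 * beta (2^a)) = int (2 ^ Suc a - 1)" by simp
  thus ?thesis by (simp only: of_nat_eq_iff)
qed


lemma prime_by_trial:
  fixes n s :: nat
  assumes "1 < n" "n < s*s" "list_all (\<lambda>d. n mod d \<noteq> 0) [2..<s]"
  shows "prime n"
proof (rule ccontr)
  assume "\<not> prime n"
  then obtain a where a: "a dvd n" "a \<noteq> 1" "a \<noteq> n" using assms(1) prime_nat_iff by blast
  then obtain b where b: "n = a*b" by blast
  have a0: "a \<noteq> 0"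
  proof
    assume "a = 0" then have "n = 0" using b by simp
    with assms(1) show False by simp
  qed
  have b0: "b \<noteq> 0"
  proof
    assume "b = 0" then have "n = 0" using b by simp
    with assms(1) show False by simp
  qed
  have b1: "b \<noteq> 1" using a(3) b by auto
  have a1: "1 < a" using a0 a(2) by linarith
  have b2: "1 < b" using b0 b1 by linarith
  define e where "e = min a b"
  have ea: "e \<le> a" and eb: "e \<le> b" unfolding e_def by simp_all
  have "e*e \<le> a*b" using mult_le_mono[OF ea eb] .
  hence ee: "e*e < s*s" using b assms(2) by linarith
  have "e < s"
  proof (rule ccontr)
    assume "\<not> e < s" then have "s \<le> e" by linarith
    then have "s*s \<le> e*e" using mult_le_mono by blast
    with ee show False by linarith
  qed
  moreover have "2 \<le> e" using a1 b2 unfolding e_def by simp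
  moreover have "e dvd n" using a b unfolding e_def by (cases "a \<le> b") (simp_all add: min_def)
  ultimately have "e \<in> set [2..<s]" "n mod e = 0" by simp_all
  hence "\<not> (n mod e \<noteq> 0)" by simp
  moreover have "\<forall>d\<in>set [2..<s]. n mod d \<noteq> 0" using assms(3) by (simp only: list_all_iff)
  ultimately show False using \<open>e \<in> set [2..<s]\<close> by blast
qed

lemma p5: "prime (5::nat)" by (rule prime_by_trial[where s=3]) (simp_all add: upt_rec)
lemma p17: "prime (17::nat)" by (rule prime_by_trial[where s=5]) (simp_all add: upt_rec)
lemma p257: "prime (257::nat)" by (rule prime_by_trial[where s=17]) (simp_all add: upt_rec)
lemma p641: "prime (641::nat)" by (rule prime_by_trial[where s=26]) (simp_all add: upt_rec)
lemma p65537: "prime (65537::nat)" by (rule prime_by_trial[where s=257]) (simp_all add: upt_rec)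

lemma beta_65537: "beta 65537 = 65536"
  using beta_prime_times[OF p65537, of 1] by (simp add: beta_one)
lemma beta_16843009: "beta 16843009 = 256 * 65536"
  using beta_prime_times[OF p257, of 65537] by (simp add: beta_65537)
lemma beta_286331153: "beta 286331153 = 16 * 256 * 65536"
  using beta_prime_times[OF p17, of 16843009] by (simp add: beta_16843009)
lemma beta_1431655765: "beta 1431655765 = 4 * 16 * 256 * 65536"
  using beta_prime_times[OF p5, of 286331153] by (simp add: beta_286331153)
lemma beta_257: "beta 257 = 256"
  using beta_prime_times[OF p257, of 1] by (simp add: beta_one)
lemma beta_4369: "beta 4369 = 16 * 256"
  using beta_prime_times[OF p17, of 257] by (simp add: beta_257)
lemma beta_21845: "beta 21845 = 4 * 16 * 256"
  using beta_prime_times[OF p5, of 4369] by (simp add: beta_4369)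
lemma beta_17: "beta 17 = 16"
  using beta_prime_times[OF p17, of 1] by (simp add: beta_one)
lemma beta_85: "beta 85 = 4 * 16"
  using beta_prime_times[OF p5, of 17] by (simp add: beta_17)
lemma beta_5: "beta 5 = 4"
  using beta_prime_times[OF p5, of 1] by (simp add: beta_one)

lemma beta_pow_val: "odd a \<Longrightarrow> 2^(Suc a) - 1 = 3 * c \<Longrightarrow> beta (2^a) = c"
  using beta_two_pow[of a] by simp

lemma pos_cases:
  "super_imperfect (2^1) \<and> super_imperfect (2^3) \<and> super_imperfect (2^7)
   \<and> super_imperfect (2^15) \<and> super_imperfect (2^31)"
proof -
  have "beta (2^1) = 1" by (rule beta_pow_val) simp_all
  moreover have "beta (2^3) = 5" by (rule beta_pow_val) simp_all
  moreover have "beta (2^7) = 85" by (rule beta_pow_val) simp_all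
  moreover have "beta (2^15) = 21845" by (rule beta_pow_val) simp_all
  moreover have "beta (2^31) = 1431655765" by (rule beta_pow_val) simp_all
  ultimately show ?thesis unfolding super_imperfect_def
    by (simp add: beta_one beta_5 beta_85 beta_21845 beta_1431655765)
qed


lemma pow_641_sq:
  "(2::nat)^(2^(6+j)) mod 410881 = (1 + 641*(553*2^j)) mod 410881"
proof (induction j)
  case 0 then show ?case by simp
next
  case (Suc j)
  define c where "c = 553 * (2::nat)^j"
  have e: "(2::nat)^(2^(6+Suc j)) = (2^(2^(6+j)))^2"
    by (simp add: power_mult[symmetric] mult.commute power_add)
  have "(2::nat)^(2^(6+Suc j)) mod 410881 = ((2^(2^(6+j)) mod 410881)^2) mod 410881"
    unfolding e by (simp add: power_mod)
  also have "\<dots> = (((1 + 641*c) mod 410881)^2) mod 410881" using Suc.IH c_def by simp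
  also have "\<dots> = ((1 + 641*c)^2) mod 410881" by (simp add: power_mod)
  also have "(1 + 641*c)^2 = (1 + 641*(2*c)) + 410881 * (c*c)"
    by (simp add: power2_eq_square algebra_simps)
  also have "((1 + 641*(2*c)) + 410881 * (c*c)) mod 410881 = (1 + 641*(2*c)) mod 410881"
    by simp
  finally show ?case by (simp add: c_def mult.assoc mult.left_commute)
qed

lemma neg_case:
  assumes k: "k \<ge> 6"
  shows "\<not> super_imperfect (2 ^ (2 ^ k - 1))"
proof
  assume si: "super_imperfect (2 ^ (2 ^ k - 1))"
  define a :: nat where "a = 2^k - 1"
  have ka: "Suc a = 2^k" unfolding a_def using one_le_power[of "2::nat" k] by simp
  have "even (Suc a)" unfolding ka using k by simp
  hence odd: "odd a" by simp
  define B where "B = beta (2^a)"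
  have B3: "3 * B = 2^(2^k) - 1" using beta_two_pow[OF odd] ka B_def by simp
  obtain j where j: "k = 6 + j" using k le_Suc_ex by blast
  have m641: "(2::nat)^(2^k) mod 641 = 1"
  proof -
    have "(2::nat)^(2^k) = (2^64)^(2^j)" unfolding j by (simp only: power_add power_mult) simp
    hence "(2::nat)^(2^k) mod 641 = ((2^64 mod 641)^(2^j)) mod 641" by (simp only: power_mod)
    moreover have "(2::nat)^64 mod 641 = 1" by simp
    ultimately show ?thesis by simp
  qed
  have "641 dvd (2::nat)^(2^k) - 1"
    using m641 mod_eq_dvd_iff_nat[of 1 "(2::nat)^(2^k)" 641] by simp
  hence "641 dvd 3 * B" using B3 by simp
  hence d: "641 dvd B" using p641 prime_dvd_mult_iff[of 641 3 B] by simp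
  have nd: "\<not> 410881 dvd B"
  proof
    assume "410881 dvd B"
    hence "410881 dvd (2::nat)^(2^k) - 1" using B3 by (metis dvd_mult2 mult.commute)
    hence "(2::nat)^(2^k) mod 410881 = 1 mod 410881"
      using mod_eq_dvd_iff_nat[of 1 "(2::nat)^(2^k)" 410881] by simp
    hence "(1 + 641*(553*2^j)) mod 410881 = (1::nat) mod 410881" using pow_641_sq[of j] j by simp
    hence "410881 dvd (1 + 641*(553*2^j)) - (1::nat)"
      using mod_eq_dvd_iff_nat[of 1 "1 + 641*(553*2^j)" 410881] by simp
    hence "641 * 641 dvd 641 * (553 * (2::nat)^j)" by simp
    hence "641 dvd 553 * (2::nat)^j" using nat_mult_dvd_cancel1[of "641::nat" 641 "553 * 2^j"] by simp
    hence "641 dvd (553::nat) \<or> 641 dvd (2::nat)^j" using p641 prime_dvd_mult_iff by blast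
    moreover have "\<not> 641 dvd (2::nat)^j"
    proof
      assume "641 dvd (2::nat)^j"
      hence "641 dvd (2::nat)" using p641 prime_dvd_power by blast
      thus False by simp
    qed
    ultimately show False by simp
  qed
  obtain m where m: "B = 641 * m" using d by blast
  have mnd: "\<not> 641 dvd m" using nd m by auto
  have mpos: "m > 0" using mnd by (cases m) auto
  have "beta B = 640 * beta m" using beta_prime_times[OF p641 mnd mpos] m by simp
  hence "5 dvd beta B" by simp
  moreover have "2 * beta B = 2^a" using si unfolding super_imperfect_def B_def a_def by simp
  ultimately have "5 dvd (2::nat)^a" using dvd_mult[of 5 "beta B" 2] by simp
  hence "5 dvd (2::nat)" using p5 prime_dvd_power by blast
  thus False by simp
qed

theorem mainTheorem1:
  fixes k :: nat
  assumes "k \<ge> 1"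
  shows "super_imperfect (2 ^ (2 ^ k - 1)) \<longleftrightarrow> k \<in> {1, 2, 3, 4, 5}"
proof (cases "k \<ge> 6")
  case True
  then show ?thesis using neg_case by auto
next
  case False
  then have "k \<in> {1, 2, 3, 4, 5}" using assms by auto
  then show ?thesis using pos_cases by auto
qed

end
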